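(* Let $G$ be a locally compact group and $K$ a compact subgroup with normalized Haar measure $\lambda_K$. Put $L_{K0}=\{\mu\in L^1(G/K):\ \lambda_K\star\mu=0\}$. If $L_{K0}$ is finite dimensional, then either $K$ is normal in $G$ or $G/K$ is finite.
   Context: $M(G)$ denotes the measure algebra of $G$ with ordinary convolution $\star$ and $L^1(G)$ the group algebra (absolutely continuous measures with respect to Haar measure). $L^1(G/K)$ is identified with $L^1(G)\star\lambda_K\subseteq M(G)$ (right $K$-invariant elements), and $M(G/K)$ with $M(G)\star\lambda_K$. *)

theory Defs
  imports "HOL-Analysis.Analysis"
begin

text \<open>Groups are written additively (type class group_add, not necessarily
commutative). A left Haar measure of a closed subgroup S (Radon, as a Borel
measure on the ambient group, concentrated on S, invariant under left
translations by elements of S).\<close>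

definition left_haar_on :: "'g::{topological_group_add} set \<Rightarrow> 'g measure \<Rightarrow> bool" where
  "left_haar_on S M \<longleftrightarrow>
     sets M = sets borel \<and>
     emeasure M (- S) = 0 \<and>
     (\<forall>x\<in>S. \<forall>A\<in>sets borel. emeasure M ((\<lambda>y. x + y) ` A) = emeasure M A) \<and>
     (\<forall>C. compact C \<longrightarrow> emeasure M C < \<infinity>) \<and>
     (\<forall>U. open U \<and> U \<inter> S \<noteq> {} \<longrightarrow> emeasure M U > 0) \<and>
     (\<forall>A\<in>sets borel. emeasure M A = (INF U\<in>{U. open U \<and> A \<subseteq> U}. emeasure M U)) \<and>
     (\<forall>U. open U \<longrightarrow> emeasure M U = (SUP C\<in>{C. compact C \<and> C \<subseteq> U}. emeasure M C))"

definition subgroup_of :: "'g::group_add set \<Rightarrow> bool" where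
  "subgroup_of K \<longleftrightarrow> 0 \<in> K \<and> (\<forall>a\<in>K. \<forall>b\<in>K. a + b \<in> K) \<and> (\<forall>a\<in>K. - a \<in> K)"

text \<open>Density (w.r.t. Haar measure of G) of the convolution lambda_K * (f dx):
  (lambda_K * f)(y) = integral over K of f(-k + y) d lambda_K(k).\<close>
definition conv_left :: "'g::group_add measure \<Rightarrow> ('g \<Rightarrow> complex) \<Rightarrow> 'g \<Rightarrow> complex" where
  "conv_left lK f = (\<lambda>y. \<integral>k. f (- k + y) \<partial>lK)"

text \<open>Density of the convolution (f dx) * lambda_K:
  (f * lambda_K)(y) = integral over K of f(y - k) d lambda_K(k)
  (the modular function is 1 on the compact group K).\<close>
definition conv_right :: "('g::group_add \<Rightarrow> complex) \<Rightarrow> 'g measure \<Rightarrow> 'g \<Rightarrow> complex" where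
  "conv_right f lK = (\<lambda>y. \<integral>k. f (y - k) \<partial>lK)"

text \<open>L^1(G/K) = L^1(G) * lambda_K, represented by densities.\<close>
definition L1_quot :: "'g::group_add measure \<Rightarrow> 'g measure \<Rightarrow> ('g \<Rightarrow> complex) set" where
  "L1_quot hG lK = {conv_right f lK | f. integrable hG f}"

definition L_K0 :: "'g::group_add measure \<Rightarrow> 'g measure \<Rightarrow> ('g \<Rightarrow> complex) set" where
  "L_K0 hG lK = {h \<in> L1_quot hG lK. AE y in hG. conv_left lK h y = 0}"

text \<open>A set V of L^1 functions spans a finite dimensional (complex) subspace of
L^1(G) (elements identified when equal a.e.).\<close>
definition fin_dim_L1 :: "'g measure \<Rightarrow> ('g \<Rightarrow> complex) set \<Rightarrow> bool" where
  "fin_dim_L1 hG V \<longleftrightarrow> (\<exists>F. finite F \<and> F \<subseteq> V \<and>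
     (\<forall>h\<in>V. \<exists>c. AE y in hG. h y = (\<Sum>g\<in>F. c g * g y)))"

end

theory Submission
  imports Defs
begin


lemma t2_Hausdorff: "Hausdorff_space (euclidean :: 'a::t2_space topology)"
  unfolding Hausdorff_space_def disjnt_def
proof (intro allI impI)
  fix x y :: 'a assume "x \<in> topspace euclidean \<and> y \<in> topspace euclidean \<and> x \<noteq> y"
  then obtain U V where "open U" "open V" "x \<in> U" "y \<in> V" "U \<inter> V = {}" using hausdorff[of x y] by blast
  then show "\<exists>U V. openin euclidean U \<and> openin euclidean V \<and> x \<in> U \<and> y \<in> V \<and> U \<inter> V = {}" by auto
qed

lemma open_vimage_UNIV: "continuous_on UNIV f \<Longrightarrow> open B \<Longrightarrow> open (f -` B)"
  using continuous_on_open_vimage[OF open_UNIV, of f] by simp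

lemma open_tube:
  fixes g :: "'a::topological_space \<Rightarrow> 'b::topological_space \<Rightarrow> 'c::topological_space"
  assumes "compact C" "open A" "continuous_on UNIV (\<lambda>p. g (fst p) (snd p))"
  shows "open {x. \<forall>c\<in>C. g x c \<in> A}"
proof (subst open_subopen, intro ballI)
  fix x0 assume x0: "x0 \<in> {x. \<forall>c\<in>C. g x c \<in> A}"
  let ?W = "(\<lambda>p. g (fst p) (snd p)) -` A"
  have W: "open ?W" using assms(2,3) by (rule open_vimage_UNIV[rotated])
  have C: "{x0} \<times> C \<subseteq> ?W" using x0 by auto
  have "\<exists>X0. x0 \<in> X0 \<and> open X0 \<and> X0 \<times> C \<subseteq> ?W"
    by (rule Elementary_Topology.tube_lemma[OF assms(1) W C])
  then obtain X0 where X0: "x0 \<in> X0" "open X0" "X0 \<times> C \<subseteq> ?W" by blast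
  have "X0 \<subseteq> {x. \<forall>c\<in>C. g x c \<in> A}"
  proof
    fix x assume "x \<in> X0"
    then have "\<forall>c\<in>C. (x, c) \<in> ?W" using X0(3) by blast
    then show "x \<in> {x. \<forall>c\<in>C. g x c \<in> A}" by simp
  qed
  then show "\<exists>T. open T \<and> x0 \<in> T \<and> T \<subseteq> {x. \<forall>c\<in>C. g x c \<in> A}" using X0 by blast
qed

lemma cont_add2: "continuous_on UNIV (\<lambda>p::'g::topological_monoid_add \<times> 'g. fst p + snd p)"
  by (intro continuous_intros)

lemma cont_ladd: "continuous_on UNIV (\<lambda>x::'g::topological_monoid_add. a + x)"
  by (intro continuous_intros)

lemma cont_radd: "continuous_on UNIV (\<lambda>x::'g::topological_monoid_add. x + a)"
  by (intro continuous_intros)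

lemma compact_sum:
  fixes C K :: "'g::topological_monoid_add set"
  assumes "compact C" "compact K"
  shows "compact ((\<lambda>p. fst p + snd p) ` (C \<times> K))"
  by (rule compact_continuous_image[OF continuous_on_subset[OF cont_add2] compact_Times[OF assms]]) simp

lemma open_rtransl:
  fixes U :: "'g::topological_group_add set"
  assumes "open U"
  shows "open ((\<lambda>w. w + y) ` U)"
proof -
  have eq: "(\<lambda>w. w + y) ` U = (\<lambda>x. x + - y) -` U"
  proof (rule set_eqI)
    fix x
    have e: "x = (x + - y) + y" by (simp add: add.assoc)
    show "x \<in> (\<lambda>w. w + y) ` U \<longleftrightarrow> x \<in> (\<lambda>x. x + - y) -` U"
    proof
      assume "x \<in> (\<lambda>w. w + y) ` U"
      then obtain u where "u \<in> U" "x = u + y" by blast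
      then show "x \<in> (\<lambda>x. x + - y) -` U" by (simp add: add.assoc)
    next
      assume "x \<in> (\<lambda>x. x + - y) -` U"
      then have "x + - y \<in> U" by simp
      then show "x \<in> (\<lambda>w. w + y) ` U" using e by (rule rev_image_eqI)
    qed
  qed
  show ?thesis unfolding eq by (rule open_vimage_UNIV[OF cont_radd assms])
qed

lemma open_sat:
  fixes U K :: "'g::topological_group_add set"
  assumes "open U"
  shows "open ((\<lambda>p. fst p + snd p) ` (U \<times> K))"
proof -
  have "(\<lambda>p. fst p + snd p) ` (U \<times> K) = (\<Union>k\<in>K. (\<lambda>w. w + k) ` U)"
  proof (rule set_eqI, rule iffI)
    fix x assume "x \<in> (\<lambda>p. fst p + snd p) ` (U \<times> K)"
    then obtain u k where "u \<in> U" "k \<in> K" "x = u + k" by auto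
    then show "x \<in> (\<Union>k\<in>K. (\<lambda>w. w + k) ` U)" by blast
  next
    fix x assume "x \<in> (\<Union>k\<in>K. (\<lambda>w. w + k) ` U)"
    then obtain u k where uk: "u \<in> U" "k \<in> K" "x = u + k" by blast
    then have "(u, k) \<in> U \<times> K" "x = (\<lambda>p. fst p + snd p) (u, k)" by auto
    then show "x \<in> (\<lambda>p. fst p + snd p) ` (U \<times> K)" by (rule image_eqI[rotated])
  qed
  moreover have "open (\<Union>k\<in>K. (\<lambda>w. w + k) ` U)"
    using open_rtransl[OF assms] by (intro open_UN) blast
  ultimately show ?thesis by simp
qed

lemma lc_base:
  fixes Op :: "'g::t2_space set"
  assumes lc: "locally_compact_space (euclidean :: 'g topology)" and "open Op" "y \<in> Op"
  shows "\<exists>U Q. open U \<and> compact Q \<and> y \<in> U \<and> U \<subseteq> Q \<and> Q \<subseteq> Op"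
proof -
  have "neighbourhood_base_of (compactin euclidean) (euclidean :: 'g topology)"
    using locally_compact_space_neighbourhood_base[of "euclidean :: 'g topology"] t2_Hausdorff lc by blast
  then have nb: "\<And>W x. openin euclidean W \<Longrightarrow> x \<in> W \<Longrightarrow>
      \<exists>U V. openin euclidean U \<and> compactin euclidean V \<and> x \<in> U \<and> U \<subseteq> V \<and> V \<subseteq> (W :: 'g set)"
    unfolding neighbourhood_base_of by blast
  have oo: "openin euclidean Op" using assms(2) by simp
  obtain U V where UV: "openin euclidean U" "compactin euclidean V" "y \<in> U" "U \<subseteq> V" "V \<subseteq> Op"
    using nb[OF oo assms(3)] by blast
  have oU: "open U" using UV(1) by simp
  have cV: "compact V" using UV(2) by simp
  show ?thesis by (rule exI[of _ U], rule exI[of _ V]) (intro conjI oU cV UV(3-5))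
qed

lemma sat_nbhd:
  fixes K Op :: "'g::{topological_group_add,t2_space} set"
  assumes lc: "locally_compact_space (euclidean :: 'g topology)" and sg: "subgroup_of K" and cK: "compact K"
    and oO: "open Op" and yO: "\<forall>k\<in>K. y + k \<in> Op"
  shows "\<exists>A C. open A \<and> compact C \<and> (\<forall>k\<in>K. y + k \<in> A) \<and> A \<subseteq> C \<and> C \<subseteq> Op \<and> (\<forall>a\<in>A. \<forall>k\<in>K. a + k \<in> A)"
proof -
  define S where "S = (\<lambda>k. y + k) ` K"
  have cS: "compact S" unfolding S_def
    by (rule compact_continuous_image[OF continuous_on_subset[OF cont_ladd] cK]) simp
  define W where "W = {w. \<forall>s\<in>S. w + s \<in> Op}"
  have oW: "open W" unfolding W_def by (rule open_tube[OF cS oO cont_add2])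
  have W0: "0 \<in> W" using yO unfolding W_def S_def by auto
  define V where "V = (\<lambda>w. w + y) ` W"
  have oV: "open V" unfolding V_def by (rule open_rtransl[OF oW])
  have yV: "y \<in> V" unfolding V_def by (rule rev_image_eqI[OF W0]) simp
  obtain U Q where UQ: "open U" "compact Q" "y \<in> U" "U \<subseteq> Q" "Q \<subseteq> V"
    using lc_base[OF lc oV yV] by blast
  define A where "A = (\<lambda>p. fst p + snd p) ` (U \<times> K)"
  define C where "C = (\<lambda>p. fst p + snd p) ` (Q \<times> K)"
  have oA: "open A" unfolding A_def by (rule open_sat[OF UQ(1)])
  have cC: "compact C" unfolding C_def by (rule compact_sum[OF UQ(2) cK])
  have yA: "\<forall>k\<in>K. y + k \<in> A"
  proof
    fix k assume "k \<in> K"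
    then have "(y, k) \<in> U \<times> K" using UQ(3) by simp
    then show "y + k \<in> A" unfolding A_def by (rule rev_image_eqI) simp
  qed
  have AC: "A \<subseteq> C" unfolding A_def C_def using UQ(4) by (intro image_mono Sigma_mono) auto
  have CO: "C \<subseteq> Op"
  proof
    fix c assume "c \<in> C"
    then obtain q k where qk: "q \<in> Q" "k \<in> K" "c = q + k" unfolding C_def by auto
    then have "q \<in> V" using UQ(5) by blast
    then obtain w where w: "w \<in> W" "q = w + y" unfolding V_def by blast
    have "y + k \<in> S" unfolding S_def using qk(2) by blast
    then have "w + (y + k) \<in> Op" using w(1) unfolding W_def by blast
    then show "c \<in> Op" using qk(3) w(2) by (simp add: add.assoc)
  qed
  have RS: "\<forall>a\<in>A. \<forall>k\<in>K. a + k \<in> A"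
  proof (intro ballI)
    fix a k assume ak: "a \<in> A" "k \<in> K"
    then obtain u k1 where uk: "u \<in> U" "k1 \<in> K" "a = u + k1" unfolding A_def by auto
    have "k1 + k \<in> K" using sg uk(2) ak(2) unfolding subgroup_of_def by blast
    then have "(u, k1 + k) \<in> U \<times> K" using uk(1) by simp
    moreover have "a + k = (\<lambda>p. fst p + snd p) (u, k1 + k)" using uk(3) by (simp add: add.assoc)
    ultimately show "a + k \<in> A" unfolding A_def by (rule rev_image_eqI)
  qed
  show ?thesis by (rule exI[of _ A], rule exI[of _ C]) (intro conjI oA cC yA AC CO RS)
qed



definition qf :: "'g::group_add measure \<Rightarrow> 'g set \<Rightarrow> 'g \<Rightarrow> real" where
  "qf lK A x = measure lK {k. - k + x \<in> A}"

definition hf :: "'g::group_add measure \<Rightarrow> 'g set \<Rightarrow> 'g \<Rightarrow> complex" where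
  "hf lK A x = complex_of_real (indicator A x) - complex_of_real (qf lK A x)"

lemma cont_E: "continuous_on UNIV (\<lambda>k::'g::topological_group_add. - k + x)"
  by (intro continuous_intros)

lemma open_E: "open A \<Longrightarrow> open {k::'g::topological_group_add. - k + x \<in> A}"
  using open_vimage_UNIV[OF cont_E, of A x] by (simp add: vimage_def)

context
  fixes hG lK :: "'g::{topological_group_add, t2_space} measure" and K :: "'g set"
  assumes sg: "subgroup_of K" and cK: "compact K"
    and hH: "left_haar_on UNIV hG" and hK: "left_haar_on K lK" and K1: "emeasure lK K = 1"
begin

lemma setsK: "sets lK = sets borel" by (rule hK[unfolded left_haar_on_def, THEN conjunct1])
lemma setsG: "sets hG = sets borel" by (rule hH[unfolded left_haar_on_def, THEN conjunct1])
lemma spaceK: "space lK = UNIV" using sets_eq_imp_space_eq[OF setsK] by (simp only: space_borel)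
lemma spaceG: "space hG = UNIV" using sets_eq_imp_space_eq[OF setsG] by (simp only: space_borel)
lemma clK: "closed K" by (rule compact_imp_closed[OF cK])
lemma mK: "- K \<in> sets lK" "K \<in> sets lK"
proof -
  have "- K \<in> sets borel" by (rule borel_open) (simp add: open_Compl clK)
  then show "- K \<in> sets lK" using setsK by simp
  have "K \<in> sets borel" by (rule borel_closed[OF clK])
  then show "K \<in> sets lK" using setsK by simp
qed
lemma nK: "emeasure lK (- K) = 0" by (rule hK[unfolded left_haar_on_def, THEN conjunct2, THEN conjunct1])
lemma invK: "x \<in> K \<Longrightarrow> A \<in> sets borel \<Longrightarrow> emeasure lK ((\<lambda>y. x + y) ` A) = emeasure lK A"
  using hK[unfolded left_haar_on_def, THEN conjunct2, THEN conjunct2, THEN conjunct1] by blast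
lemma posK: "open U \<Longrightarrow> U \<inter> K \<noteq> {} \<Longrightarrow> emeasure lK U > 0"
  using hK[unfolded left_haar_on_def, THEN conjunct2, THEN conjunct2, THEN conjunct2, THEN conjunct2, THEN conjunct1] by blast
lemma posG: "open U \<Longrightarrow> U \<noteq> {} \<Longrightarrow> emeasure hG U > 0"
  using hH[unfolded left_haar_on_def, THEN conjunct2, THEN conjunct2, THEN conjunct2, THEN conjunct2, THEN conjunct1] by simp
lemma finG: "compact C \<Longrightarrow> emeasure hG C < \<infinity>"
  using hH[unfolded left_haar_on_def, THEN conjunct2, THEN conjunct2, THEN conjunct2, THEN conjunct1] by blast
lemma innerK: "open U \<Longrightarrow> emeasure lK U = (SUP C\<in>{C. compact C \<and> C \<subseteq> U}. emeasure lK C)"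
  using hK[unfolded left_haar_on_def, THEN conjunct2, THEN conjunct2, THEN conjunct2, THEN conjunct2, THEN conjunct2, THEN conjunct2] by blast

lemma mK0: "0 \<in> K" and mKadd: "a \<in> K \<Longrightarrow> b \<in> K \<Longrightarrow> a + b \<in> K" and mKneg: "a \<in> K \<Longrightarrow> - a \<in> K"
  using sg unfolding subgroup_of_def by blast+

lemma lK_UNIV: "emeasure lK UNIV = 1"
proof -
  have "emeasure lK (K \<union> - K) = emeasure lK K + emeasure lK (- K)"
    by (rule plus_emeasure[symmetric]) (use mK in auto)
  then show ?thesis using K1 nK by simp
qed

lemma finK: "finite_measure lK"
  by (rule finite_measureI) (simp add: spaceK lK_UNIV)

lemma measK_UNIV: "measure lK UNIV = 1"
  using lK_UNIV by (simp add: measure_def)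

lemma AE_K: "AE k in lK. k \<in> K"
proof (rule AE_I')
  show "- K \<in> null_sets lK" using mK nK by (simp add: null_sets_def)
  show "{x \<in> space lK. x \<notin> K} \<subseteq> - K" by auto
qed

lemma borel_cont: "continuous_on UNIV f \<Longrightarrow> f \<in> borel_measurable borel"
  by (rule borel_measurable_continuous_onI)

lemma meas_lK_lK: "continuous_on UNIV f \<Longrightarrow> f \<in> measurable lK lK"
  using borel_cont[of f] measurable_cong_sets[OF setsK setsK] by simp

lemma bm_lK: "(f :: 'g \<Rightarrow> 'b::topological_space) \<in> borel_measurable borel \<Longrightarrow> f \<in> borel_measurable lK"
proof -
  have "(borel_measurable lK :: ('g \<Rightarrow> 'b) set) = borel_measurable borel" by (rule measurable_cong_sets[OF setsK refl])
  then show "f \<in> borel_measurable borel \<Longrightarrow> f \<in> borel_measurable lK" by simp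
qed

lemma bm_hG: "(f :: 'g \<Rightarrow> 'b::topological_space) \<in> borel_measurable borel \<Longrightarrow> f \<in> borel_measurable hG"
proof -
  have "(borel_measurable hG :: ('g \<Rightarrow> 'b) set) = borel_measurable borel" by (rule measurable_cong_sets[OF setsG refl])
  then show "f \<in> borel_measurable borel \<Longrightarrow> f \<in> borel_measurable hG" by simp
qed

lemma distr_inv: assumes k0: "k0 \<in> K" shows "distr lK lK (\<lambda>k. k0 + k) = lK"
proof (rule measure_eqI)
  show "sets (distr lK lK (\<lambda>k. k0 + k)) = sets lK" by simp
  fix A assume "A \<in> sets (distr lK lK (\<lambda>k. k0 + k))"
  then have A: "A \<in> sets lK" by simp
  have m: "(\<lambda>k. k0 + k) \<in> measurable lK lK" by (rule meas_lK_lK[OF cont_ladd])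
  have eq: "(\<lambda>k. k0 + k) -` A \<inter> space lK = (\<lambda>k. - k0 + k) ` A"
  proof (rule set_eqI)
    fix x
    have e: "x = - k0 + (k0 + x)" by (simp add: add.assoc)
    show "x \<in> (\<lambda>k. k0 + k) -` A \<inter> space lK \<longleftrightarrow> x \<in> (\<lambda>k. - k0 + k) ` A"
    proof
      assume "x \<in> (\<lambda>k. k0 + k) -` A \<inter> space lK"
      then have "k0 + x \<in> A" by simp
      then show "x \<in> (\<lambda>k. - k0 + k) ` A" using e by (rule rev_image_eqI)
    next
      assume "x \<in> (\<lambda>k. - k0 + k) ` A"
      then obtain a where "a \<in> A" "x = - k0 + a" by blast
      then show "x \<in> (\<lambda>k. k0 + k) -` A \<inter> space lK" by (simp add: spaceK add.assoc)
    qed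
  qed
  have "emeasure (distr lK lK (\<lambda>k. k0 + k)) A = emeasure lK ((\<lambda>k. k0 + k) -` A \<inter> space lK)"
    by (rule emeasure_distr[OF m A])
  also have "\<dots> = emeasure lK ((\<lambda>k. - k0 + k) ` A)" using eq by simp
  also have "\<dots> = emeasure lK A" using invK[OF mKneg[OF k0]] A setsK by simp
  finally show "emeasure (distr lK lK (\<lambda>k. k0 + k)) A = emeasure lK A" .
qed

lemma integral_shift:
  fixes f :: "'g \<Rightarrow> complex"
  assumes k0: "k0 \<in> K" and f: "f \<in> borel_measurable lK"
  shows "(\<integral>k. f (k0 + k) \<partial>lK) = (\<integral>k. f k \<partial>lK)"
proof -
  have m: "(\<lambda>k. k0 + k) \<in> measurable lK lK" by (rule meas_lK_lK[OF cont_ladd])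
  have "(\<integral>k. f k \<partial>distr lK lK (\<lambda>k. k0 + k)) = (\<integral>k. f (k0 + k) \<partial>lK)"
    by (rule integral_distr[OF m f])
  then show ?thesis using distr_inv[OF k0] by simp
qed


lemma meas_eq_fin: "emeasure lK S = ennreal (measure lK S)"
  by (rule finite_measure.emeasure_eq_measure[OF finK])

context
  fixes A C :: "'g set"
  assumes oA: "open A" and cC: "compact C" and AC: "A \<subseteq> C"
    and RS: "\<forall>a\<in>A. \<forall>k\<in>K. a + k \<in> A"
begin

lemma E_sets: "{k. - k + x \<in> A} \<in> sets lK"
  using borel_open[OF open_E[OF oA, of x]] setsK by simp

lemma q_emeasure: "emeasure lK {k. - k + x \<in> A} = ennreal (qf lK A x)"
  unfolding qf_def by (rule meas_eq_fin)

lemma q_nonneg: "0 \<le> qf lK A x" unfolding qf_def by (rule measure_nonneg)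

lemma q_le1: "qf lK A x \<le> 1"
  using finite_measure.bounded_measure[OF finK, of "{k. - k + x \<in> A}"] measK_UNIV spaceK
  unfolding qf_def by simp

lemma q_meas: "qf lK A \<in> borel_measurable borel"
proof -
  have "open {x. a < qf lK A x}" for a
  proof (cases "a < 0")
    case True
    have "{x. a < qf lK A x} = UNIV"
    proof (rule set_eqI)
      fix x show "x \<in> {x. a < qf lK A x} \<longleftrightarrow> x \<in> UNIV" using True q_nonneg[of x] by simp
    qed
    then show ?thesis by simp
  next
    case False
    then have a0: "0 \<le> a" by simp
    show ?thesis
    proof (subst open_subopen, intro ballI)
      fix x0 assume "x0 \<in> {x. a < qf lK A x}"
      then have lt: "a < qf lK A x0" by simp
      have "ennreal a < ennreal (qf lK A x0)" using lt a0 by (simp add: ennreal_less_iff)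
      then have "ennreal a < emeasure lK {k. - k + x0 \<in> A}" using q_emeasure by simp
      then have "ennreal a < (SUP D\<in>{D. compact D \<and> D \<subseteq> {k. - k + x0 \<in> A}}. emeasure lK D)"
        using innerK[OF open_E[OF oA, of x0]] by simp
      then obtain D where D: "compact D" "D \<subseteq> {k. - k + x0 \<in> A}" "ennreal a < emeasure lK D"
        unfolding less_SUP_iff by blast
      define T where "T = {x. \<forall>c\<in>D. - c + x \<in> A}"
      have oT: "open T" unfolding T_def
        by (rule open_tube[OF D(1) oA, of "\<lambda>x c. - c + x"]) (intro continuous_intros)
      have x0T: "x0 \<in> T" using D(2) unfolding T_def by blast
      have TS: "T \<subseteq> {x. a < qf lK A x}"
      proof
        fix x assume "x \<in> T"
        then have "D \<subseteq> {k. - k + x \<in> A}" unfolding T_def by blast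
        then have "emeasure lK D \<le> emeasure lK {k. - k + x \<in> A}" by (rule emeasure_mono) (rule E_sets)
        then have "ennreal a < ennreal (qf lK A x)" using D(3) q_emeasure[of x] by simp
        then show "x \<in> {x. a < qf lK A x}" using a0 by (simp add: ennreal_less_iff)
      qed
      show "\<exists>T. open T \<and> x0 \<in> T \<and> T \<subseteq> {x. a < qf lK A x}"
        by (rule exI[of _ T]) (intro conjI oT x0T TS)
    qed
  qed
  then have "\<forall>a. {w \<in> space borel. a < qf lK A w} \<in> sets borel"
  proof (intro allI)
    fix a assume o: "\<And>a. open {x. a < qf lK A x}"
    have "{w \<in> space borel. a < qf lK A w} = {x. a < qf lK A x}" by simp
    then show "{w \<in> space borel. a < qf lK A w} \<in> sets borel" using borel_open[OF o[of a]] by (simp only:)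
  qed
  then show ?thesis by (rule borel_measurable_iff_greater[THEN iffD2])
qed

lemma conv_ind: "conv_left lK (\<lambda>x. complex_of_real (indicator A x)) x = complex_of_real (qf lK A x)"
proof -
  have e: "(\<lambda>k. indicator A (- k + x) :: real) = indicator {k. - k + x \<in> A}"
    by (rule ext) (simp add: indicator_def)
  have "conv_left lK (\<lambda>x. complex_of_real (indicator A x)) x
      = complex_of_real (\<integral>k. indicator A (- k + x) \<partial>lK)"
    unfolding conv_left_def by simp
  also have "\<dots> = complex_of_real (measure lK {k. - k + x \<in> A})"
    unfolding e by (simp add: spaceK)
  finally show ?thesis unfolding qf_def .
qed

lemma q_rinv: assumes k0: "k0 \<in> K" shows "qf lK A (x + k0) = qf lK A x"
proof -
  have "{k. - k + (x + k0) \<in> A} = {k. - k + x \<in> A}"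
  proof (rule Collect_cong)
    fix k
    have e1: "- k + (x + k0) = (- k + x) + k0" by (simp add: add.assoc)
    have e2: "- k + x = (- k + (x + k0)) + - k0" by (simp add: add.assoc del: add_uminus_conv_diff)
    show "- k + (x + k0) \<in> A \<longleftrightarrow> - k + x \<in> A"
    proof
      assume "- k + (x + k0) \<in> A"
      then have "(- k + (x + k0)) + - k0 \<in> A" using RS mKneg[OF k0] by blast
      then show "- k + x \<in> A" using e2 by simp
    next
      assume "- k + x \<in> A"
      then have "(- k + x) + k0 \<in> A" using RS k0 by blast
      then show "- k + (x + k0) \<in> A" using e1 by simp
    qed
  qed
  then show ?thesis unfolding qf_def by simp
qed

lemma q_linv: assumes k0: "k0 \<in> K" shows "qf lK A (- k0 + x) = qf lK A x"
proof -
  have m: "(\<lambda>k. k0 + k) \<in> measurable lK lK" by (rule meas_lK_lK[OF cont_ladd])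
  have eq: "{k. - k + (- k0 + x) \<in> A} = (\<lambda>k. k0 + k) -` {k. - k + x \<in> A} \<inter> space lK"
  proof (rule set_eqI)
    fix k
    have "- (k0 + k) + x = - k + (- k0 + x)" by (simp add: minus_add add.assoc del: add_uminus_conv_diff)
    then show "k \<in> {k. - k + (- k0 + x) \<in> A} \<longleftrightarrow> k \<in> (\<lambda>k. k0 + k) -` {k. - k + x \<in> A} \<inter> space lK"
      by (simp add: spaceK)
  qed
  have "emeasure lK {k. - k + (- k0 + x) \<in> A} = emeasure (distr lK lK (\<lambda>k. k0 + k)) {k. - k + x \<in> A}"
    unfolding eq by (rule emeasure_distr[OF m E_sets, symmetric])
  also have "\<dots> = emeasure lK {k. - k + x \<in> A}" using distr_inv[OF k0] by simp
  finally show ?thesis unfolding qf_def measure_def by simp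
qed

lemma q_supp: assumes "qf lK A x \<noteq> 0" shows "x \<in> (\<lambda>p. fst p + snd p) ` (K \<times> C)"
proof (rule ccontr)
  assume nx: "x \<notin> (\<lambda>p. fst p + snd p) ` (K \<times> C)"
  have sub: "{k. - k + x \<in> A} \<subseteq> - K"
  proof
    fix k assume k: "k \<in> {k. - k + x \<in> A}"
    show "k \<in> - K"
    proof
      assume kK: "k \<in> K"
      have "(k, - k + x) \<in> K \<times> C" using kK k AC by auto
      moreover have "x = (\<lambda>p. fst p + snd p) (k, - k + x)" by (simp add: add.assoc)
      ultimately have "x \<in> (\<lambda>p. fst p + snd p) ` (K \<times> C)" by (rule rev_image_eqI)
      then show False using nx by simp
    qed
  qed
  have "emeasure lK {k. - k + x \<in> A} \<le> emeasure lK (- K)" by (rule emeasure_mono[OF sub mK(1)])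
  then have "emeasure lK {k. - k + x \<in> A} = 0" using nK by simp
  then have "qf lK A x = 0" unfolding qf_def measure_def by simp
  then show False using assms by simp
qed


lemma h_meas: "hf lK A \<in> borel_measurable borel"
proof -
  have i: "(indicator A :: 'g \<Rightarrow> real) \<in> borel_measurable borel"
    by (rule borel_measurable_indicator[OF borel_open[OF oA]])
  have "(\<lambda>x. complex_of_real (indicator A x)) \<in> borel_measurable borel"
    by (rule measurable_compose[OF i borel_measurable_of_real])
  moreover have "(\<lambda>x. complex_of_real (qf lK A x)) \<in> borel_measurable borel"
    by (rule measurable_compose[OF q_meas borel_measurable_of_real])
  ultimately have "(\<lambda>x. complex_of_real (indicator A x) - complex_of_real (qf lK A x)) \<in> borel_measurable borel"
    by (rule borel_measurable_diff)
  then show ?thesis unfolding hf_def[abs_def] .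
qed

lemma h_int: "integrable hG (hf lK A)"
proof -
  define D where "D = (\<lambda>p. fst p + snd p) ` (K \<times> C)"
  have cD: "compact D" unfolding D_def by (rule compact_sum[OF cK cC])
  have CD: "C \<subseteq> D"
  proof
    fix c assume "c \<in> C"
    then have "(0, c) \<in> K \<times> C" using mK0 by simp
    moreover have "c = (\<lambda>p. fst p + snd p) (0, c)" by simp
    ultimately show "c \<in> D" unfolding D_def by (rule rev_image_eqI)
  qed
  have Dm: "D \<in> sets hG" using borel_closed[OF compact_imp_closed[OF cD]] setsG by simp
  have "integrable hG (indicator D :: 'g \<Rightarrow> real)"
    by (rule integrable_real_indicator[OF Dm finG[OF cD]])
  then have I: "integrable hG (\<lambda>x. 2 * indicator D x :: real)" by (rule integrable_mult_right)
  have bound: "norm (hf lK A x) \<le> norm (2 * indicator D x :: real)" for x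
  proof (cases "x \<in> D")
    case True
    have "norm (hf lK A x) \<le> norm (complex_of_real (indicator A x)) + norm (complex_of_real (qf lK A x))"
      unfolding hf_def by (rule norm_triangle_ineq4)
    also have "\<dots> \<le> 1 + 1" using q_nonneg[of x] q_le1[of x] by (intro add_mono) (auto simp: indicator_def)
    finally show ?thesis using True by simp
  next
    case False
    then have "x \<notin> A" using AC CD by blast
    moreover have "qf lK A x = 0" using q_supp False D_def by blast
    ultimately show ?thesis unfolding hf_def by simp
  qed
  show ?thesis by (rule Bochner_Integration.integrable_bound[OF I bm_hG[OF h_meas]]) (rule AE_I2, rule bound)
qed

lemma A_rinv: assumes k0: "k0 \<in> K" shows "x + k0 \<in> A \<longleftrightarrow> x \<in> A"
proof
  assume "x + k0 \<in> A"
  then have "(x + k0) + - k0 \<in> A" using RS mKneg[OF k0] by blast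
  then show "x \<in> A" by (simp add: add.assoc)
next
  assume "x \<in> A" then show "x + k0 \<in> A" using RS k0 by blast
qed

lemma h_rinv: assumes k0: "k0 \<in> K" shows "hf lK A (x + k0) = hf lK A x"
  unfolding hf_def using q_rinv[OF k0, of x] A_rinv[OF k0, of x] by (simp add: indicator_def)

lemma h_conv_right: "conv_right (hf lK A) lK = hf lK A"
proof (rule ext)
  fix x
  have m1: "(\<lambda>k. hf lK A (x - k)) \<in> borel_measurable lK"
  proof -
    have "(\<lambda>k. x - k) \<in> borel_measurable borel" by (rule borel_cont) (intro continuous_intros)
    then have "(\<lambda>k. hf lK A (x - k)) \<in> borel_measurable borel" by (rule measurable_compose[OF _ h_meas])
    then show ?thesis by (rule bm_lK)
  qed
  have ae: "AE k in lK. hf lK A (x - k) = hf lK A x"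
    using AE_K
  proof (rule AE_mp[OF _ AE_I2], intro impI)
    fix k assume "k \<in> K"
    then have "hf lK A (x + - k) = hf lK A x" by (rule h_rinv[OF mKneg])
    then show "hf lK A (x - k) = hf lK A x" by simp
  qed
  have "conv_right (hf lK A) lK x = (\<integral>k. hf lK A (x - k) \<partial>lK)" unfolding conv_right_def by simp
  also have "\<dots> = (\<integral>k. hf lK A x \<partial>lK)" by (rule integral_cong_AE[OF m1 _ ae]) simp
  also have "\<dots> = hf lK A x" using measK_UNIV spaceK by simp
  finally show "conv_right (hf lK A) lK x = hf lK A x" .
qed

lemma h_conv_left: "conv_left lK (hf lK A) x = 0"
proof -
  have mi: "(\<lambda>k. complex_of_real (indicator A (- k + x))) \<in> borel_measurable lK"
  proof -
    have i: "(indicator A :: 'g \<Rightarrow> real) \<in> borel_measurable borel"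
      by (rule borel_measurable_indicator[OF borel_open[OF oA]])
    have "(\<lambda>k. - k + x) \<in> borel_measurable borel" by (rule borel_cont[OF cont_E])
    then have "(\<lambda>k. indicator A (- k + x) :: real) \<in> borel_measurable borel" by (rule measurable_compose[OF _ i])
    then have "(\<lambda>k. complex_of_real (indicator A (- k + x))) \<in> borel_measurable borel"
      by (rule measurable_compose[OF _ borel_measurable_of_real])
    then show ?thesis by (rule bm_lK)
  qed
  have mq: "(\<lambda>k. complex_of_real (qf lK A (- k + x))) \<in> borel_measurable lK"
  proof -
    have "(\<lambda>k. - k + x) \<in> borel_measurable borel" by (rule borel_cont[OF cont_E])
    then have "(\<lambda>k. qf lK A (- k + x)) \<in> borel_measurable borel" by (rule measurable_compose[OF _ q_meas])
    then have "(\<lambda>k. complex_of_real (qf lK A (- k + x))) \<in> borel_measurable borel"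
      by (rule measurable_compose[OF _ borel_measurable_of_real])
    then show ?thesis by (rule bm_lK)
  qed
  have ii: "integrable lK (\<lambda>k. complex_of_real (indicator A (- k + x)))"
    by (rule finite_measure.integrable_const_bound[OF finK _ mi, where B=1]) (simp add: indicator_def)
  have iq: "integrable lK (\<lambda>k. complex_of_real (qf lK A (- k + x)))"
    by (rule finite_measure.integrable_const_bound[OF finK _ mq, where B=1])
       (simp add: q_nonneg q_le1)
  have ae: "AE k in lK. complex_of_real (qf lK A (- k + x)) = complex_of_real (qf lK A x)"
    using AE_K
  proof (rule AE_mp[OF _ AE_I2], intro impI)
    fix k assume "k \<in> K"
    then show "complex_of_real (qf lK A (- k + x)) = complex_of_real (qf lK A x)" using q_linv by simp
  qed
  have "conv_left lK (hf lK A) x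
      = (\<integral>k. complex_of_real (indicator A (- k + x)) - complex_of_real (qf lK A (- k + x)) \<partial>lK)"
    unfolding conv_left_def hf_def by simp
  also have "\<dots> = (\<integral>k. complex_of_real (indicator A (- k + x)) \<partial>lK) - (\<integral>k. complex_of_real (qf lK A (- k + x)) \<partial>lK)"
    by (rule Bochner_Integration.integral_diff[OF ii iq])
  also have "(\<integral>k. complex_of_real (indicator A (- k + x)) \<partial>lK) = complex_of_real (qf lK A x)"
    using conv_ind[of x] unfolding conv_left_def by simp
  also have "(\<integral>k. complex_of_real (qf lK A (- k + x)) \<partial>lK) = (\<integral>k. complex_of_real (qf lK A x) \<partial>lK)"
    by (rule integral_cong_AE[OF mq _ ae]) simp
  also have "\<dots> = complex_of_real (qf lK A x)" using measK_UNIV spaceK by simp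
  finally show ?thesis by simp
qed

lemma h_LK0: "hf lK A \<in> L_K0 hG lK"
proof -
  have "hf lK A \<in> L1_quot hG lK"
    unfolding L1_quot_def using h_conv_right h_int by force
  moreover have "AE y in hG. conv_left lK (hf lK A) y = 0" by (simp add: h_conv_left)
  ultimately show ?thesis unfolding L_K0_def by simp
qed

end


lemma indep:
  fixes Y :: "'i set" and Af Cf Rf :: "'i \<Rightarrow> 'g set" and a :: "'i \<Rightarrow> complex"
  assumes fY: "finite Y"
    and oA: "\<forall>y\<in>Y. open (Af y)" and cC: "\<forall>y\<in>Y. compact (Cf y)" and AC: "\<forall>y\<in>Y. Af y \<subseteq> Cf y"
    and RS: "\<forall>y\<in>Y. \<forall>a\<in>Af y. \<forall>k\<in>K. a + k \<in> Af y"
    and disj: "\<forall>y\<in>Y. \<forall>y'\<in>Y. y \<noteq> y' \<longrightarrow> Cf y \<inter> Cf y' = {}"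
    and oR: "\<forall>y\<in>Y. open (Rf y)" and neR: "\<forall>y\<in>Y. Rf y \<noteq> {}" and RA: "\<forall>y\<in>Y. Rf y \<subseteq> Af y"
    and esc: "\<forall>y\<in>Y. \<forall>x\<in>Rf y. \<exists>k\<in>K. - k + x \<notin> (\<Union>y'\<in>Y. Cf y')"
    and ae: "AE x in hG. (\<Sum>y\<in>Y. a y * hf lK (Af y) x) = 0"
  shows "\<forall>y\<in>Y. a y = 0"
proof (rule ccontr)
  assume "\<not> (\<forall>y\<in>Y. a y = 0)"
  then obtain y1 where y1: "y1 \<in> Y" "a y1 \<noteq> 0" by blast
  then have neY: "Y \<noteq> {}" by blast
  define m where "m = Max ((\<lambda>y. norm (a y)) ` Y)"
  have "m \<in> (\<lambda>y. norm (a y)) ` Y" unfolding m_def using fY neY by (intro Max_in) auto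
  then obtain j where j: "j \<in> Y" "m = norm (a j)" by blast
  have mx: "norm (a y) \<le> norm (a j)" if "y \<in> Y" for y
    using Max_ge[of "(\<lambda>y. norm (a y)) ` Y" "norm (a y)"] fY that j(2) unfolding m_def by simp
  have "0 < norm (a y1)" using y1(2) by simp
  then have pos: "norm (a j) > 0" using mx[OF y1(1)] by (rule less_le_trans)
  define P where "P x \<longleftrightarrow> (\<Sum>y\<in>Y. a y * hf lK (Af y) x) = 0" for x
  have "\<exists>x\<in>Rf j. P x"
  proof (rule ccontr)
    assume nP: "\<not> (\<exists>x\<in>Rf j. P x)"
    from ae obtain N where N: "{x \<in> space hG. \<not> P x} \<subseteq> N" "emeasure hG N = 0" "N \<in> sets hG"
      unfolding P_def by (rule AE_E)
    have "Rf j \<subseteq> N" using nP N(1) spaceG by blast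
    then have "emeasure hG (Rf j) \<le> emeasure hG N" by (rule emeasure_mono[OF _ N(3)])
    moreover have "emeasure hG (Rf j) > 0" using posG oR neR j(1) by blast
    ultimately show False using N(2) by simp
  qed
  then obtain x where x: "x \<in> Rf j" "P x" by blast
  have xA: "x \<in> Af j" using x(1) RA j(1) by blast
  have ind: "indicator (Af y) x = (if y = j then 1 else 0 :: real)" if y: "y \<in> Y" for y
  proof (cases "y = j")
    case True then show ?thesis using xA by simp
  next
    case False
    have "x \<in> Cf j" using xA AC j(1) by blast
    then have "x \<notin> Cf y" using disj j(1) y False by blast
    then have "x \<notin> Af y" using AC y by blast
    then show ?thesis using False by simp
  qed
  define q where "q y = qf lK (Af y) x" for y
  have q0: "0 \<le> q y" for y unfolding q_def qf_def by (rule measure_nonneg)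
  have "(\<Sum>y\<in>Y. a y * hf lK (Af y) x)
      = (\<Sum>y\<in>Y. (if y = j then a y else 0)) - (\<Sum>y\<in>Y. a y * complex_of_real (q y))"
  proof -
    have "a y * hf lK (Af y) x = (if y = j then a y else 0) - a y * complex_of_real (q y)" if "y \<in> Y" for y
      using ind[OF that] unfolding hf_def q_def by (simp add: algebra_simps)
    then have "(\<Sum>y\<in>Y. a y * hf lK (Af y) x) = (\<Sum>y\<in>Y. (if y = j then a y else 0) - a y * complex_of_real (q y))"
      by (rule sum.cong[OF refl])
    also have "\<dots> = (\<Sum>y\<in>Y. (if y = j then a y else 0)) - (\<Sum>y\<in>Y. a y * complex_of_real (q y))"
      by (rule sum_subtractf)
    finally show ?thesis .
  qed
  also have "(\<Sum>y\<in>Y. (if y = j then a y else 0)) = a j" using j(1) fY by simp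
  finally have aj: "a j = (\<Sum>y\<in>Y. a y * complex_of_real (q y))" using x(2) unfolding P_def by simp
  define E where "E y = {k. - k + x \<in> Af y}" for y
  have Es: "E y \<in> sets lK" if "y \<in> Y" for y
    unfolding E_def using borel_open[OF open_E[of "Af y" x]] oA that setsK by simp
  have Edisj: "disjoint_family_on E Y"
    unfolding disjoint_family_on_def
  proof (intro ballI impI)
    fix y y' assume yy: "y \<in> Y" "y' \<in> Y" "y \<noteq> y'"
    show "E y \<inter> E y' = {}"
    proof (rule equals0I)
      fix k assume "k \<in> E y \<inter> E y'"
      then have "- k + x \<in> Cf y" "- k + x \<in> Cf y'" using AC yy unfolding E_def by blast+
      then show False using disj yy by blast
    qed
  qed
  have sumq: "(\<Sum>y\<in>Y. q y) = measure lK (\<Union>y\<in>Y. E y)"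
  proof -
    have "measure lK (\<Union>y\<in>Y. E y) = (\<Sum>y\<in>Y. measure lK (E y))"
    proof (rule measure_finite_Union[OF fY _ Edisj])
      show "E ` Y \<subseteq> sets lK" using Es by blast
      fix y show "emeasure lK (E y) \<noteq> \<infinity>" using meas_eq_fin by simp
    qed
    then show ?thesis unfolding q_def qf_def E_def by simp
  qed
  define Cl where "Cl = (\<Union>y'\<in>Y. Cf y')"
  have clCl: "closed Cl" unfolding Cl_def
    by (rule compact_imp_closed, rule compact_UN[OF fY]) (use cC in blast)
  define Sx where "Sx = {k. - k + x \<in> - Cl}"
  have oSx: "open Sx" unfolding Sx_def by (rule open_E) (simp add: open_Compl clCl)
  obtain k0 where k0: "k0 \<in> K" "- k0 + x \<notin> Cl" using esc j(1) x(1) unfolding Cl_def by blast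
  have "k0 \<in> Sx \<inter> K" using k0 unfolding Sx_def by simp
  then have "emeasure lK Sx > 0" using posK[OF oSx] by blast
  then have mSx: "measure lK Sx > 0" using meas_eq_fin[of Sx] by simp
  have Ssets: "Sx \<in> sets lK" using borel_open[OF oSx] setsK by simp
  have Usets: "(\<Union>y\<in>Y. E y) \<in> sets lK" using Es fY by blast
  have dis: "(\<Union>y\<in>Y. E y) \<inter> Sx = {}"
  proof (rule equals0I)
    fix k assume "k \<in> (\<Union>y\<in>Y. E y) \<inter> Sx"
    then obtain y where "y \<in> Y" "- k + x \<in> Af y" "- k + x \<notin> Cl" unfolding E_def Sx_def by blast
    then show False using AC unfolding Cl_def by blast
  qed
  have "measure lK ((\<Union>y\<in>Y. E y) \<union> Sx) = measure lK (\<Union>y\<in>Y. E y) + measure lK Sx"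
    by (rule finite_measure.finite_measure_Union[OF finK Usets Ssets dis])
  moreover have "measure lK ((\<Union>y\<in>Y. E y) \<union> Sx) \<le> 1"
    using finite_measure.bounded_measure[OF finK] measK_UNIV spaceK by metis
  ultimately have sq1: "(\<Sum>y\<in>Y. q y) < 1" using sumq mSx by simp
  have "norm (a j) \<le> (\<Sum>y\<in>Y. norm (a y * complex_of_real (q y)))"
    unfolding aj by (rule norm_sum)
  also have "\<dots> = (\<Sum>y\<in>Y. norm (a y) * q y)" using q0 by (simp add: norm_mult)
  also have "\<dots> \<le> (\<Sum>y\<in>Y. norm (a j) * q y)"
    by (rule sum_mono) (use mx q0 in \<open>simp add: mult_right_mono\<close>)
  also have "\<dots> = norm (a j) * (\<Sum>y\<in>Y. q y)" by (simp add: sum_distrib_left)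
  also have "\<dots> < norm (a j)" using sq1 pos by simp
  finally show False by simp
qed

end



definition cosK :: "'g::group_add set \<Rightarrow> 'g \<Rightarrow> 'g set" where
  "cosK K y = (\<lambda>k. y + k) ` K"
definition dblK :: "'g::group_add set \<Rightarrow> 'g \<Rightarrow> 'g set" where
  "dblK K y = {v. \<exists>a\<in>K. \<exists>b\<in>K. v = a + y + b}"
definition orbK :: "'g::group_add set \<Rightarrow> 'g \<Rightarrow> 'g set set" where
  "orbK K y = cosK K ` dblK K y"

context
  fixes K :: "'g::group_add set"
  assumes sg: "subgroup_of K"
begin

lemma K0: "0 \<in> K" using sg unfolding subgroup_of_def by blast
lemma Kadd: "a \<in> K \<Longrightarrow> b \<in> K \<Longrightarrow> a + b \<in> K" using sg unfolding subgroup_of_def by blast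
lemma Kneg: "a \<in> K \<Longrightarrow> - a \<in> K" using sg unfolding subgroup_of_def by blast
lemma Kneg_iff: "- a \<in> K \<longleftrightarrow> a \<in> K" using Kneg[of a] Kneg[of "-a"] by auto

lemma mem_cos: "x \<in> cosK K y \<longleftrightarrow> - y + x \<in> K"
proof
  assume "x \<in> cosK K y"
  then obtain k where "k \<in> K" "x = y + k" unfolding cosK_def by blast
  then show "- y + x \<in> K" by (simp add: minus_add_cancel)
next
  assume "- y + x \<in> K"
  moreover have "x = y + (- y + x)" by (simp add: add_minus_cancel)
  ultimately show "x \<in> cosK K y" unfolding cosK_def by blast
qed

lemma self_cos: "y \<in> cosK K y" using K0 by (simp add: mem_cos)

lemma cos_eq: "cosK K y = cosK K y' \<longleftrightarrow> - y + y' \<in> K"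
proof
  assume h: "cosK K y = cosK K y'"
  have "y' \<in> cosK K y" using self_cos[of y'] h by simp
  then show "- y + y' \<in> K" by (simp add: mem_cos)
next
  assume h: "- y + y' \<in> K"
  show "cosK K y = cosK K y'"
  proof (rule set_eqI)
    fix x
    have e1: "- y' + x = - (- y + y') + (- y + x)" by (simp add: minus_add add.assoc)
    have e2: "- y + x = (- y + y') + (- y' + x)" by (simp add: add.assoc)
    show "x \<in> cosK K y \<longleftrightarrow> x \<in> cosK K y'"
      unfolding mem_cos using h e1 e2 Kadd Kneg by metis
  qed
qed

lemma cos_eq_mem: "cosK K y = cosK K y' \<longleftrightarrow> y' \<in> cosK K y"
  by (simp add: cos_eq mem_cos)

lemma cos_add_K: "k \<in> K \<Longrightarrow> cosK K (u + k) = cosK K u"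
  by (simp add: cos_eq minus_add add.assoc Kneg)

lemma dbl_self: "y \<in> dblK K y"
  unfolding dblK_def using K0 by force

lemma dbl_eq: assumes "w \<in> dblK K y" shows "dblK K w = dblK K y"
proof -
  obtain a b where ab: "a \<in> K" "b \<in> K" "w = a + y + b" using assms unfolding dblK_def by blast
  show ?thesis
  proof (rule set_eqI)
    fix v
    show "v \<in> dblK K w \<longleftrightarrow> v \<in> dblK K y"
    proof
      assume "v \<in> dblK K w"
      then obtain c d where cd: "c \<in> K" "d \<in> K" "v = c + w + d" unfolding dblK_def by blast
      then have "v = (c + a) + y + (b + d)" using ab by (simp add: add.assoc)
      then show "v \<in> dblK K y" unfolding dblK_def using ab cd Kadd by blast
    next
      assume "v \<in> dblK K y"
      then obtain c d where cd: "c \<in> K" "d \<in> K" "v = c + y + d" unfolding dblK_def by blast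
      then have "v = (c + - a) + w + (- b + d)" using ab by (simp add: add.assoc del: add_uminus_conv_diff)
      then show "v \<in> dblK K w" unfolding dblK_def using ab cd Kadd Kneg by blast
    qed
  qed
qed

lemma cos_sub_dbl: "v \<in> dblK K y \<Longrightarrow> cosK K v \<subseteq> dblK K y"
proof
  fix x assume v: "v \<in> dblK K y" and x: "x \<in> cosK K v"
  obtain a b where ab: "a \<in> K" "b \<in> K" "v = a + y + b" using v unfolding dblK_def by blast
  obtain k where k: "k \<in> K" "x = v + k" using x unfolding cosK_def by blast
  have "x = a + y + (b + k)" using ab k by (simp add: add.assoc)
  then show "x \<in> dblK K y" unfolding dblK_def using ab k Kadd by blast
qed

lemma cos_in_orb: "cosK K v \<in> orbK K y \<longleftrightarrow> v \<in> dblK K y"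
proof
  assume "cosK K v \<in> orbK K y"
  then obtain u where u: "u \<in> dblK K y" "cosK K v = cosK K u" unfolding orbK_def by blast
  then have "v \<in> cosK K u" using self_cos[of v] by simp
  then show "v \<in> dblK K y" using cos_sub_dbl[OF u(1)] by blast
qed (simp add: orbK_def)

lemma orb_eq: "v \<in> dblK K y \<Longrightarrow> orbK K v = orbK K y"
  unfolding orbK_def using dbl_eq by simp

lemma orb_sub_range: "orbK K y \<subseteq> range (cosK K)"
  unfolding orbK_def by blast

lemma left_in_dbl: "k \<in> K \<Longrightarrow> k + y \<in> dblK K y"
  unfolding dblK_def using K0 by force

lemma dbl_cos: assumes "v \<in> dblK K y" shows "\<exists>k\<in>K. cosK K v = cosK K (k + y)"
proof -
  obtain a b where ab: "a \<in> K" "b \<in> K" "v = a + y + b" using assms unfolding dblK_def by blast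
  then show ?thesis using cos_add_K[of b "a + y"] by auto
qed

lemma image_cos: "(\<lambda>v. a + v) ` cosK K y = cosK K (a + y)"
  unfolding cosK_def image_image by (simp add: add.assoc)

lemma cos_orb_self: "cosK K y \<in> orbK K y"
  using cos_in_orb dbl_self by blast

lemma orb_eq_cos: "cosK K u \<in> orbK K w \<Longrightarrow> orbK K u = orbK K w"
  using cos_in_orb orb_eq by blast

lemma notB_iff: "(\<forall>k\<in>K. cosK K (k + y) = cosK K y) \<longleftrightarrow> (\<forall>k\<in>K. - y + k + y \<in> K)"
proof -
  have e: "- (k + y) + y = - y + - k + y" for k by (simp add: minus_add add.assoc)
  have "(\<forall>k\<in>K. cosK K (k + y) = cosK K y) \<longleftrightarrow> (\<forall>k\<in>K. - y + - k + y \<in> K)"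
    by (simp add: cos_eq e)
  also have "\<dots> \<longleftrightarrow> (\<forall>k\<in>K. - y + k + y \<in> K)"
  proof
    assume L: "\<forall>k\<in>K. - y + - k + y \<in> K"
    show "\<forall>k\<in>K. - y + k + y \<in> K"
    proof
      fix k assume "k \<in> K"
      then have "- k \<in> K" by (rule Kneg)
      then show "- y + k + y \<in> K" using L by force
    qed
  next
    assume L: "\<forall>k\<in>K. - y + k + y \<in> K"
    show "\<forall>k\<in>K. - y + - k + y \<in> K" using L Kneg by blast
  qed
  finally show ?thesis .
qed

lemma case_c:
  assumes nn: "\<not> (\<forall>x. \<forall>k\<in>K. x + k - x \<in> K)"
    and fo: "\<forall>y. finite (orbK K y)"
    and fB: "finite (orbK K ` {y. \<exists>k\<in>K. cosK K (k + y) \<noteq> cosK K y})"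
  shows "finite (range (cosK K))"
proof -
  define B where "B = {y. \<exists>k\<in>K. cosK K (k + y) \<noteq> cosK K y}"
  have notB: "y \<notin> B \<longleftrightarrow> (\<forall>k\<in>K. - y + k + y \<in> K)" for y
    unfolding B_def using notB_iff[of y] by blast
  obtain x k where xk: "k \<in> K" "x + k - x \<notin> K" using nn by blast
  have "- (- x) + k + - x = x + k - x" by simp
  then have "\<not> (\<forall>k\<in>K. - (- x) + k + - x \<in> K)" using xk by force
  then have b0: "- x \<in> B" using notB[of "-x"] by blast
  define b0 where "b0 = - x"
  have b0B: "b0 \<in> B" using b0 b0_def by simp
  have clos: "y1 + y2 \<notin> B" if "y1 \<notin> B" "y2 \<notin> B" for y1 y2
  proof -
    have "- (y1 + y2) + k + (y1 + y2) \<in> K" if k: "k \<in> K" for k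
    proof -
      have "- y1 + k + y1 \<in> K" using notB that(1) k \<open>y1 \<notin> B\<close> by blast
      then have "- y2 + (- y1 + k + y1) + y2 \<in> K" using notB \<open>y2 \<notin> B\<close> by blast
      moreover have "- (y1 + y2) + k + (y1 + y2) = - y2 + (- y1 + k + y1) + y2"
        by (simp add: minus_add add.assoc del: add_uminus_conv_diff)
      ultimately show ?thesis by simp
    qed
    then show ?thesis using notB by blast
  qed
  define T1 where "T1 = \<Union> (orbK K ` B)"
  have fT1: "finite T1" unfolding T1_def using fB fo B_def by auto
  have BT1: "y \<in> \<Union>T1" if "y \<in> B" for y
    using that self_cos[of y] cos_orb_self[of y] unfolding T1_def by blast
  have cosBT1: "cosK K ` B \<subseteq> T1" unfolding T1_def using cos_orb_self by blast
  define rp where "rp c = (SOME r. cosK K r = c)" for c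
  have orbneg: "orbK K (- r) = orbK K (- rp (cosK K r))" for r
  proof -
    have "cosK K (rp (cosK K r)) = cosK K r" unfolding rp_def by (rule someI_ex) blast
    then have "rp (cosK K r) \<in> cosK K r" using self_cos by (metis)
    then obtain k where k: "k \<in> K" "rp (cosK K r) = r + k" unfolding cosK_def by blast
    have "- rp (cosK K r) = - k + - r + 0" using k by (simp add: minus_add)
    then have "- rp (cosK K r) \<in> dblK K (- r)" unfolding dblK_def using k K0 Kneg by blast
    then show ?thesis using orb_eq by simp
  qed
  define T2 where "T2 = \<Union> ((\<lambda>r. orbK K (- r)) ` B)"
  have "(\<lambda>r. orbK K (- r)) ` B \<subseteq> (\<lambda>c. orbK K (- rp c)) ` T1"
    using orbneg cosBT1 by blast
  then have "finite ((\<lambda>r. orbK K (- r)) ` B)" using fT1 finite_subset by blast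
  then have fT2: "finite T2" unfolding T2_def using fo by blast
  have NBT2: "y \<in> \<Union>T2" if "- y \<in> B" for y
  proof -
    have "cosK K y \<in> orbK K (- (- y))" using cos_orb_self by simp
    then show ?thesis using that self_cos[of y] unfolding T2_def by blast
  qed
  define U where "U = T1 \<union> T2"
  have fU: "finite U" using fT1 fT2 U_def by simp
  have "T1 \<subseteq> range (cosK K)" unfolding T1_def
  proof (rule Union_least)
    fix X assume "X \<in> orbK K ` B"
    then obtain y where "X = orbK K y" by blast
    then show "X \<subseteq> range (cosK K)" using orb_sub_range[of y] by (simp only:)
  qed
  moreover have "T2 \<subseteq> range (cosK K)" unfolding T2_def
  proof (rule Union_least)
    fix X assume "X \<in> (\<lambda>r. orbK K (- r)) ` B"
    then obtain y where "X = orbK K (- y)" by blast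
    then show "X \<subseteq> range (cosK K)" using orb_sub_range[of "- y"] by (simp only:)
  qed
  ultimately have Ucos: "U \<subseteq> range (cosK K)" unfolding U_def by (rule Un_least)
  have inU: "y \<in> \<Union>U" if "y \<in> B \<or> - y \<in> B" for y
  proof -
    from that show ?thesis
    proof
      assume "y \<in> B" then have "y \<in> \<Union>T1" by (rule BT1)
      then show ?thesis unfolding U_def by simp
    next
      assume "- y \<in> B" then have "y \<in> \<Union>T2" by (rule NBT2)
      then show ?thesis unfolding U_def by simp
    qed
  qed
  have cover: "x \<in> \<Union>U \<or> b0 + x \<in> \<Union>U" for x
  proof (cases "x \<in> B \<or> - x \<in> B \<or> b0 + x \<in> B \<or> - (b0 + x) \<in> B")
    case True
    then have "(x \<in> B \<or> - x \<in> B) \<or> (b0 + x \<in> B \<or> - (b0 + x) \<in> B)" by simp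
    then show ?thesis
    proof
      assume "x \<in> B \<or> - x \<in> B" then show ?thesis using inU[of x] by simp
    next
      assume "b0 + x \<in> B \<or> - (b0 + x) \<in> B" then show ?thesis using inU[of "b0 + x"] by simp
    qed
  next
    case False
    then have "b0 + x \<notin> B" "- x \<notin> B" by auto
    then have "b0 + x + - x \<notin> B" by (rule clos)
    then show ?thesis using b0B by (simp add: add.assoc)
  qed
  have "range (cosK K) \<subseteq> U \<union> ((\<lambda>c. (\<lambda>v. - b0 + v) ` c) ` U)"
  proof
    fix c assume "c \<in> range (cosK K)"
    then obtain x where cx: "c = cosK K x" by blast
    from cover[of x] show "c \<in> U \<union> ((\<lambda>c. (\<lambda>v. - b0 + v) ` c) ` U)"
    proof
      assume "x \<in> \<Union>U"
      then obtain d where d: "d \<in> U" "x \<in> d" by blast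
      then obtain w where w: "d = cosK K w" using Ucos by blast
      then have "cosK K w = cosK K x" using d cos_eq_mem[of w x] by simp
      then have "c = d" using w cx by simp
      then show ?thesis using d by blast
    next
      assume "b0 + x \<in> \<Union>U"
      then obtain d where d: "d \<in> U" "b0 + x \<in> d" by blast
      then obtain w where w: "d = cosK K w" using Ucos by blast
      then have "cosK K w = cosK K (b0 + x)" using d cos_eq_mem[of w "b0 + x"] by simp
      then have "cosK K (b0 + x) = d" using w by simp
      moreover have "c = (\<lambda>v. - b0 + v) ` cosK K (b0 + x)"
        using cx image_cos[of "- b0" "b0 + x"] by (simp add: add.assoc)
      ultimately show ?thesis using d by blast
    qed
  qed
  then show ?thesis using fU finite_subset by blast
qed

lemma comb_S:
  assumes nn: "\<not> (\<forall>x. \<forall>k\<in>K. x + k - x \<in> K)"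
    and inf: "infinite (range (cosK K))"
  shows "\<exists>S. finite S \<and> card S = n \<and> S \<subseteq> range (cosK K) \<and>
           (\<forall>y. cosK K y \<in> S \<longrightarrow> (\<exists>k\<in>K. cosK K (k + y) \<notin> S))"
proof -
  define B where "B = {y. \<exists>k\<in>K. cosK K (k + y) \<noteq> cosK K y}"
  consider (a) y0 where "infinite (orbK K y0)" | (b) "infinite (orbK K ` B)"
    | (c) "\<forall>y. finite (orbK K y)" "finite (orbK K ` B)" by blast
  then show ?thesis
  proof cases
    case a
    obtain S where S: "S \<subseteq> orbK K y0" "finite S" "card S = n"
      using infinite_arbitrarily_large[OF a] by blast
    have "\<exists>k\<in>K. cosK K (k + y) \<notin> S" if "cosK K y \<in> S" for y
    proof -
      have "cosK K y \<in> orbK K y0" using that S(1) by blast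
      then have "y \<in> dblK K y0" using cos_in_orb by blast
      then have "orbK K y = orbK K y0" by (rule orb_eq)
      then have "infinite (orbK K y)" using a by simp
      then have "infinite (orbK K y - S)" using S(2) by (rule Diff_infinite_finite[rotated])
      then have "orbK K y - S \<noteq> {}" by (metis finite.emptyI)
      then obtain c where c: "c \<in> orbK K y" "c \<notin> S" by blast
      then obtain v where v: "v \<in> dblK K y" "c = cosK K v" unfolding orbK_def by blast
      then obtain k where "k \<in> K" "cosK K v = cosK K (k + y)" using dbl_cos by blast
      then show ?thesis using c v by auto
    qed
    moreover have "S \<subseteq> range (cosK K)" using S(1) orb_sub_range by blast
    ultimately show ?thesis using S by blast
  next
    case b
    obtain Obs where Obs: "Obs \<subseteq> orbK K ` B" "finite Obs" "card Obs = n"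
      using infinite_arbitrarily_large[OF b] by blast
    define rep where "rep Ob = (SOME y. y \<in> B \<and> orbK K y = Ob)" for Ob
    have rep: "rep Ob \<in> B \<and> orbK K (rep Ob) = Ob" if "Ob \<in> Obs" for Ob
    proof -
      have "\<exists>y. y \<in> B \<and> orbK K y = Ob" using that Obs(1) by blast
      then show ?thesis unfolding rep_def by (rule someI_ex)
    qed
    define S where "S = (\<lambda>Ob. cosK K (rep Ob)) ` Obs"
    have inj: "inj_on (\<lambda>Ob. cosK K (rep Ob)) Obs"
    proof (rule inj_onI)
      fix O1 O2 assume o: "O1 \<in> Obs" "O2 \<in> Obs" "cosK K (rep O1) = cosK K (rep O2)"
      then have "cosK K (rep O2) \<in> orbK K (rep O1)" using cos_orb_self[of "rep O1"] by simp
      then have "orbK K (rep O2) = orbK K (rep O1)" by (rule orb_eq_cos)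
      then show "O1 = O2" using rep[OF o(1)] rep[OF o(2)] by simp
    qed
    have "\<exists>k\<in>K. cosK K (k + y) \<notin> S" if yS: "cosK K y \<in> S" for y
    proof -
      obtain Ob where Ob: "Ob \<in> Obs" "cosK K y = cosK K (rep Ob)" using yS S_def by auto
      define r where "r = rep Ob"
      have rB: "r \<in> B" using rep[OF Ob(1)] r_def by blast
      then obtain k where k: "k \<in> K" "cosK K (k + r) \<noteq> cosK K r" unfolding B_def by blast
      have "y \<in> cosK K r" using Ob(2) self_cos[of y] r_def by simp
      then obtain k1 where k1: "k1 \<in> K" "y = r + k1" unfolding cosK_def by blast
      have eq: "cosK K (k + y) = cosK K (k + r)"
        using cos_add_K[OF k1(1), of "k + r"] k1(2) by (simp add: add.assoc)
      have ne: "cosK K (k + y) \<noteq> cosK K y" using eq k(2) Ob(2) r_def by simp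
      have "k + y = k + r + k1" using k1(2) by (simp add: add.assoc)
      then have ind: "k + y \<in> dblK K r" unfolding dblK_def using k(1) k1(1) by blast
      show ?thesis
      proof (intro bexI[OF _ k(1)] notI)
        assume "cosK K (k + y) \<in> S"
        then obtain Ob' where Ob': "Ob' \<in> Obs" "cosK K (k + y) = cosK K (rep Ob')" using S_def by auto
        have "cosK K (k + y) \<in> orbK K r" using ind cos_in_orb by blast
        then have "cosK K (rep Ob') \<in> orbK K r" using Ob'(2) by simp
        then have "orbK K (rep Ob') = orbK K r" by (rule orb_eq_cos)
        then have "Ob' = Ob" using rep[OF Ob'(1)] rep[OF Ob(1)] r_def by simp
        then show False using ne Ob'(2) Ob(2) by simp
      qed
    qed
    moreover have "card S = n" using inj Obs S_def card_image by auto
    moreover have "finite S" using Obs S_def by simp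
    moreover have "S \<subseteq> range (cosK K)" using S_def by auto
    ultimately show ?thesis by blast
  next
    case c
    then have "finite (range (cosK K))" using case_c[OF nn] B_def by simp
    then show ?thesis using inf by simp
  qed
qed

lemma comb_Y:
  assumes nn: "\<not> (\<forall>x. \<forall>k\<in>K. x + k - x \<in> K)"
    and inf: "infinite (range (cosK K))"
  shows "\<exists>Y. finite Y \<and> card Y = n \<and> (\<forall>y\<in>Y. \<forall>y'\<in>Y. y \<noteq> y' \<longrightarrow> - y + y' \<notin> K) \<and>
           (\<forall>y\<in>Y. \<exists>k\<in>K. \<forall>y'\<in>Y. - y' + (k + y) \<notin> K)"
proof -
  obtain S where S: "finite S" "card S = n" "S \<subseteq> range (cosK K)"
    "\<And>y. cosK K y \<in> S \<Longrightarrow> (\<exists>k\<in>K. cosK K (k + y) \<notin> S)"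
    using comb_S[OF nn inf, of n] by blast
  define rp where "rp c = (SOME y. cosK K y = c)" for c
  have rp: "cosK K (rp c) = c" if "c \<in> S" for c
  proof -
    have "\<exists>y. cosK K y = c" using that S(3) by blast
    then show ?thesis unfolding rp_def by (rule someI_ex)
  qed
  have inj: "inj_on rp S"
  proof (rule inj_onI)
    fix c c' assume "c \<in> S" "c' \<in> S" "rp c = rp c'"
    then show "c = c'" using rp by metis
  qed
  define Y where "Y = rp ` S"
  have "finite Y" using S(1) Y_def by simp
  moreover have "card Y = n" using inj S(2) Y_def card_image by auto
  moreover have "\<forall>y\<in>Y. \<forall>y'\<in>Y. y \<noteq> y' \<longrightarrow> - y + y' \<notin> K"
  proof (intro ballI impI)
    fix y y' assume yy: "y \<in> Y" "y' \<in> Y" "y \<noteq> y'"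
    then obtain c c' where cc: "c \<in> S" "c' \<in> S" "y = rp c" "y' = rp c'" unfolding Y_def by blast
    then have "c \<noteq> c'" using yy(3) by blast
    then have "cosK K y \<noteq> cosK K y'" using rp cc by simp
    then show "- y + y' \<notin> K" using cos_eq by blast
  qed
  moreover have "\<forall>y\<in>Y. \<exists>k\<in>K. \<forall>y'\<in>Y. - y' + (k + y) \<notin> K"
  proof
    fix y assume "y \<in> Y"
    then obtain c where c: "c \<in> S" "y = rp c" unfolding Y_def by blast
    then have "cosK K y \<in> S" using rp by simp
    then obtain k where k: "k \<in> K" "cosK K (k + y) \<notin> S" using S(4) by blast
    have "- y' + (k + y) \<notin> K" if y'Y: "y' \<in> Y" for y'
    proof
      assume "- y' + (k + y) \<in> K"
      then have "cosK K y' = cosK K (k + y)" using cos_eq by blast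
      moreover obtain c' where "c' \<in> S" "y' = rp c'" using y'Y unfolding Y_def by blast
      ultimately show False using rp k(2) by simp
    qed
    then show "\<exists>k\<in>K. \<forall>y'\<in>Y. - y' + (k + y) \<notin> K" using k(1) by blast
  qed
  ultimately show ?thesis by blast
qed

end



lemma lin_dep:
  fixes v :: "'i \<Rightarrow> 'f \<Rightarrow> complex"
  assumes "finite F"
  shows "finite I \<Longrightarrow> card F < card I \<Longrightarrow> \<exists>a. (\<exists>i\<in>I. a i \<noteq> 0) \<and> (\<forall>g\<in>F. (\<Sum>i\<in>I. a i * v i g) = 0)"
  using assms
proof (induction F arbitrary: I v rule: finite_induct)
  case empty
  then have "I \<noteq> {}" by auto
  then show ?case by (intro exI[of _ "\<lambda>_. 1"]) auto
next
  case (insert g0 F I v)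
  show ?case
  proof (cases "\<forall>i\<in>I. v i g0 = 0")
    case True
    have "card F < card I" using insert by simp
    then obtain a where a: "\<exists>i\<in>I. a i \<noteq> 0" "\<forall>g\<in>F. (\<Sum>i\<in>I. a i * v i g) = 0"
      using insert.IH[OF insert.prems(1)] by blast
    have "(\<Sum>i\<in>I. a i * v i g0) = 0" using True by simp
    then show ?thesis using a by auto
  next
    case False
    then obtain i0 where i0: "i0 \<in> I" "v i0 g0 \<noteq> 0" by blast
    define I' where "I' = I - {i0}"
    define w where "w i g = v i g - (v i g0 / v i0 g0) * v i0 g" for i g
    have fI': "finite I'" using insert.prems(1) I'_def by simp
    have "card I' = card I - 1" using i0(1) insert.prems(1) I'_def by simp
    then have "card F < card I'" using insert by simp
    then obtain b where b: "\<exists>i\<in>I'. b i \<noteq> 0" "\<forall>g\<in>F. (\<Sum>i\<in>I'. b i * w i g) = 0"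
      using insert.IH[of I' w] fI' by blast
    define s where "s = (\<Sum>i\<in>I'. b i * v i g0)"
    define a where "a i = (if i = i0 then - s / v i0 g0 else b i)" for i
    have sumI: "(\<Sum>i\<in>I. a i * v i g) = a i0 * v i0 g + (\<Sum>i\<in>I'. b i * v i g)" for g
    proof -
      have "(\<Sum>i\<in>I. a i * v i g) = a i0 * v i0 g + (\<Sum>i\<in>I'. a i * v i g)"
        unfolding I'_def by (rule sum.remove[OF insert.prems(1) i0(1)])
      moreover have "(\<Sum>i\<in>I'. a i * v i g) = (\<Sum>i\<in>I'. b i * v i g)"
        by (rule sum.cong) (auto simp: a_def I'_def)
      ultimately show ?thesis by simp
    qed
    have bw: "(\<Sum>i\<in>I'. b i * w i g) = (\<Sum>i\<in>I'. b i * v i g) - s * (v i0 g / v i0 g0)" for g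
    proof -
      have "b i * w i g = b i * v i g - (b i * v i g0) * (v i0 g / v i0 g0)" for i
        unfolding w_def by (simp add: algebra_simps)
      then have "(\<Sum>i\<in>I'. b i * w i g) = (\<Sum>i\<in>I'. b i * v i g - (b i * v i g0) * (v i0 g / v i0 g0))"
        by simp
      also have "\<dots> = (\<Sum>i\<in>I'. b i * v i g) - s * (v i0 g / v i0 g0)"
        unfolding s_def by (simp add: sum_subtractf sum_distrib_right sum_divide_distrib)
      finally show ?thesis .
    qed
    have "(\<Sum>i\<in>I. a i * v i g) = 0" if g: "g \<in> insert g0 F" for g
    proof (cases "g = g0")
      case True
      have "a i0 * v i0 g0 = - s" using i0(2) by (simp add: a_def)
      then show ?thesis using sumI[of g0] True s_def by simp
    next
      case False
      then have "g \<in> F" using g by simp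
      then have "(\<Sum>i\<in>I'. b i * v i g) = s * (v i0 g / v i0 g0)" using b(2) bw[of g] by simp
      moreover have "a i0 * v i0 g = - s * (v i0 g / v i0 g0)" by (simp add: a_def)
      ultimately show ?thesis using sumI[of g] by simp
    qed
    moreover have "\<exists>i\<in>I. a i \<noteq> 0" using b(1) unfolding a_def I'_def by auto
    ultimately show ?thesis by blast
  qed
qed



lemma coset_diff:
  fixes K :: "'g::group_add set"
  assumes sg: "subgroup_of K" and e: "y + k = w + k'" and k: "k \<in> K" "k' \<in> K"
  shows "- y + w \<in> K"
proof -
  have "w = (w + k') + - k'" by (simp add: add.assoc)
  also have "\<dots> = (y + k) + - k'" using e by simp
  also have "\<dots> = y + (k + - k')" by (simp add: add.assoc del: add_uminus_conv_diff)
  finally have "- y + w = - y + (y + (k + - k'))" by simp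
  then have "- y + w = k + - k'" by (simp del: add_uminus_conv_diff)
  moreover have "k + - k' \<in> K" using sg k unfolding subgroup_of_def by blast
  ultimately show ?thesis by simp
qed

lemma construct:
  fixes K :: "'g::{topological_group_add,t2_space} set" and Y :: "'g set" and kk :: "'g \<Rightarrow> 'g"
  assumes lc: "locally_compact_space (euclidean :: 'g topology)" and sg: "subgroup_of K" and cK: "compact K"
    and fY: "finite Y"
    and dist: "\<forall>y\<in>Y. \<forall>y'\<in>Y. y \<noteq> y' \<longrightarrow> - y + y' \<notin> K"
    and zk: "\<forall>y\<in>Y. kk y \<in> K \<and> (\<forall>y'\<in>Y. - y' + (kk y + y) \<notin> K)"
  shows "\<exists>Af Cf. (\<forall>y\<in>Y. open (Af y) \<and> compact (Cf y) \<and> Af y \<subseteq> Cf y \<and> y \<in> Af y \<and>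
                   (\<forall>a\<in>Af y. \<forall>k\<in>K. a + k \<in> Af y)) \<and>
                (\<forall>y\<in>Y. \<forall>y'\<in>Y. y \<noteq> y' \<longrightarrow> Cf y \<inter> Cf y' = {}) \<and>
                (\<forall>y\<in>Y. \<forall>y'\<in>Y. kk y' + y' \<notin> Cf y)"
proof -
  have K0: "0 \<in> K" using sg unfolding subgroup_of_def by blast
  have cimg: "compact ((\<lambda>k. w + k) ` K)" for w
    by (rule compact_continuous_image[OF continuous_on_subset[OF cont_ladd] cK]) simp
  define Sy where "Sy w = (\<lambda>k. w + k) ` K" for w
  define Z where "Z = (\<Union>y\<in>Y. Sy (kk y + y))"
  have cZ: "compact Z" unfolding Z_def Sy_def by (rule compact_UN[OF fY]) (rule cimg)
  define O1 where "O1 y = - (Z \<union> (\<Union>y'\<in>Y - {y}. Sy y'))" for y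
  have oO1: "open (O1 y)" for y
  proof -
    have "compact (\<Union>y'\<in>Y - {y}. Sy y')" unfolding Sy_def by (rule compact_UN) (use fY cimg in auto)
    then have "compact (Z \<union> (\<Union>y'\<in>Y - {y}. Sy y'))" using cZ by (intro compact_Un)
    then show ?thesis unfolding O1_def by (intro open_Compl compact_imp_closed)
  qed
  have in1: "\<forall>k\<in>K. y + k \<in> O1 y" if y: "y \<in> Y" for y
  proof
    fix k assume k: "k \<in> K"
    have nZ: "y + k \<notin> Z"
    proof
      assume "y + k \<in> Z"
      then obtain y' k' where yk: "y' \<in> Y" "k' \<in> K" "y + k = (kk y' + y') + k'" unfolding Z_def Sy_def by blast
      then have i: "- y + (kk y' + y') \<in> K" using coset_diff[OF sg yk(3) k yk(2)] by simp
      have "\<forall>y''\<in>Y. - y'' + (kk y' + y') \<notin> K" using zk yk(1) by blast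
      then show False using i y by blast
    qed
    have nS: "y + k \<notin> Sy y'" if y': "y' \<in> Y - {y}" for y'
    proof
      assume "y + k \<in> Sy y'"
      then obtain k' where k': "k' \<in> K" "y + k = y' + k'" unfolding Sy_def by blast
      have i: "- y + y' \<in> K" by (rule coset_diff[OF sg k'(2) k k'(1)])
      have y'Y: "y' \<in> Y" and ne: "y \<noteq> y'" using y' by auto
      show False using dist[rule_format, OF y y'Y ne] i by simp
    qed
    show "y + k \<in> O1 y" unfolding O1_def using nZ nS by blast
  qed
  have ex1: "\<forall>y\<in>Y. \<exists>p. open (fst p) \<and> compact (snd p) \<and> (\<forall>k\<in>K. y + k \<in> fst p) \<and> fst p \<subseteq> snd p \<and>
      snd p \<subseteq> O1 y \<and> (\<forall>a\<in>fst p. \<forall>k\<in>K. a + k \<in> fst p)"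
  proof
    fix y assume "y \<in> Y"
    from sat_nbhd[OF lc sg cK oO1 in1[OF this]] obtain A C where
      AC: "open A" "compact C" "\<forall>k\<in>K. y + k \<in> A" "A \<subseteq> C" "C \<subseteq> O1 y" "\<forall>a\<in>A. \<forall>k\<in>K. a + k \<in> A"
      by blast
    show "\<exists>p. open (fst p) \<and> compact (snd p) \<and> (\<forall>k\<in>K. y + k \<in> fst p) \<and> fst p \<subseteq> snd p \<and>
      snd p \<subseteq> O1 y \<and> (\<forall>a\<in>fst p. \<forall>k\<in>K. a + k \<in> fst p)"
      by (rule exI[of _ "(A, C)"]) (simp add: AC)
  qed
  from bchoice[OF ex1] obtain p1 where p1: "\<forall>y\<in>Y. open (fst (p1 y)) \<and> compact (snd (p1 y)) \<and>
      (\<forall>k\<in>K. y + k \<in> fst (p1 y)) \<and> fst (p1 y) \<subseteq> snd (p1 y) \<and>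
      snd (p1 y) \<subseteq> O1 y \<and> (\<forall>a\<in>fst (p1 y). \<forall>k\<in>K. a + k \<in> fst (p1 y))" ..
  define O2 where "O2 y = fst (p1 y) \<inter> - (\<Union>y'\<in>Y - {y}. snd (p1 y'))" for y
  have oO2: "open (O2 y)" if "y \<in> Y" for y
  proof -
    have "compact (\<Union>y'\<in>Y - {y}. snd (p1 y'))" by (rule compact_UN) (use fY p1 in auto)
    then have "open (- (\<Union>y'\<in>Y - {y}. snd (p1 y')))" by (intro open_Compl compact_imp_closed)
    then show ?thesis unfolding O2_def using p1 that by (intro open_Int) auto
  qed
  have in2: "\<forall>k\<in>K. y + k \<in> O2 y" if y: "y \<in> Y" for y
  proof
    fix k assume k: "k \<in> K"
    have a: "y + k \<in> fst (p1 y)" using p1 y k by blast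
    have b: "y + k \<notin> snd (p1 y')" if y': "y' \<in> Y - {y}" for y'
    proof
      assume "y + k \<in> snd (p1 y')"
      then have "y + k \<in> O1 y'" using p1 y' by blast
      moreover have "y + k \<in> Sy y" unfolding Sy_def using k by blast
      ultimately show False unfolding O1_def using y y' by blast
    qed
    show "y + k \<in> O2 y" unfolding O2_def using a b by blast
  qed
  have ex2: "\<forall>y\<in>Y. \<exists>p. open (fst p) \<and> compact (snd p) \<and> (\<forall>k\<in>K. y + k \<in> fst p) \<and> fst p \<subseteq> snd p \<and>
      snd p \<subseteq> O2 y \<and> (\<forall>a\<in>fst p. \<forall>k\<in>K. a + k \<in> fst p)"
  proof
    fix y assume y: "y \<in> Y"
    from sat_nbhd[OF lc sg cK oO2[OF y] in2[OF y]] obtain A C where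
      AC: "open A" "compact C" "\<forall>k\<in>K. y + k \<in> A" "A \<subseteq> C" "C \<subseteq> O2 y" "\<forall>a\<in>A. \<forall>k\<in>K. a + k \<in> A"
      by blast
    show "\<exists>p. open (fst p) \<and> compact (snd p) \<and> (\<forall>k\<in>K. y + k \<in> fst p) \<and> fst p \<subseteq> snd p \<and>
      snd p \<subseteq> O2 y \<and> (\<forall>a\<in>fst p. \<forall>k\<in>K. a + k \<in> fst p)"
      by (rule exI[of _ "(A, C)"]) (simp add: AC)
  qed
  from bchoice[OF ex2] obtain p2 where p2: "\<forall>y\<in>Y. open (fst (p2 y)) \<and> compact (snd (p2 y)) \<and>
      (\<forall>k\<in>K. y + k \<in> fst (p2 y)) \<and> fst (p2 y) \<subseteq> snd (p2 y) \<and>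
      snd (p2 y) \<subseteq> O2 y \<and> (\<forall>a\<in>fst (p2 y). \<forall>k\<in>K. a + k \<in> fst (p2 y))" ..
  have p1D: "fst (p1 y) \<subseteq> snd (p1 y)" "snd (p1 y) \<subseteq> O1 y" if "y \<in> Y" for y
    using p1[rule_format, OF that] by simp_all
  have p2D: "open (fst (p2 y))" "compact (snd (p2 y))" "\<forall>k\<in>K. y + k \<in> fst (p2 y)"
    "fst (p2 y) \<subseteq> snd (p2 y)" "snd (p2 y) \<subseteq> O2 y" "\<forall>a\<in>fst (p2 y). \<forall>k\<in>K. a + k \<in> fst (p2 y)"
    if "y \<in> Y" for y
    using p2[rule_format, OF that] by simp_all
  define Af where "Af y = fst (p2 y)" for y
  define Cf where "Cf y = snd (p2 y)" for y
  have P1: "\<forall>y\<in>Y. open (Af y) \<and> compact (Cf y) \<and> Af y \<subseteq> Cf y \<and> y \<in> Af y \<and>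
                   (\<forall>a\<in>Af y. \<forall>k\<in>K. a + k \<in> Af y)"
  proof
    fix y assume y: "y \<in> Y"
    have "y + 0 \<in> fst (p2 y)" using p2D(3)[OF y] K0 by blast
    then have "y \<in> Af y" unfolding Af_def by simp
    then show "open (Af y) \<and> compact (Cf y) \<and> Af y \<subseteq> Cf y \<and> y \<in> Af y \<and> (\<forall>a\<in>Af y. \<forall>k\<in>K. a + k \<in> Af y)"
      unfolding Af_def Cf_def using p2D[OF y] by simp
  qed
  have P2: "\<forall>y\<in>Y. \<forall>y'\<in>Y. y \<noteq> y' \<longrightarrow> Cf y \<inter> Cf y' = {}"
  proof (intro ballI impI)
    fix y y' assume yy: "y \<in> Y" "y' \<in> Y" "y \<noteq> y'"
    have y'm: "y' \<in> Y - {y}" using yy by simp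
    have "Cf y \<subseteq> O2 y" unfolding Cf_def by (rule p2D(5)[OF yy(1)])
    also have "O2 y \<subseteq> - snd (p1 y')" unfolding O2_def using y'm by blast
    finally have c1: "Cf y \<subseteq> - snd (p1 y')" .
    have "Cf y' \<subseteq> O2 y'" unfolding Cf_def by (rule p2D(5)[OF yy(2)])
    also have "O2 y' \<subseteq> fst (p1 y')" unfolding O2_def by blast
    also have "fst (p1 y') \<subseteq> snd (p1 y')" by (rule p1D(1)[OF yy(2)])
    finally have c2: "Cf y' \<subseteq> snd (p1 y')" .
    show "Cf y \<inter> Cf y' = {}" using c1 c2 by blast
  qed
  have P3: "\<forall>y\<in>Y. \<forall>y'\<in>Y. kk y' + y' \<notin> Cf y"
  proof (intro ballI)
    fix y y' assume yy: "y \<in> Y" "y' \<in> Y"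
    have "Cf y \<subseteq> O2 y" unfolding Cf_def by (rule p2D(5)[OF yy(1)])
    also have "O2 y \<subseteq> fst (p1 y)" unfolding O2_def by blast
    also have "fst (p1 y) \<subseteq> snd (p1 y)" by (rule p1D(1)[OF yy(1)])
    also have "snd (p1 y) \<subseteq> O1 y" by (rule p1D(2)[OF yy(1)])
    also have "O1 y \<subseteq> - Z" unfolding O1_def by blast
    finally have c: "Cf y \<subseteq> - Z" .
    have "kk y' + y' + 0 \<in> Sy (kk y' + y')" unfolding Sy_def using K0 by blast
    then have "kk y' + y' \<in> Z" unfolding Z_def using yy(2) by auto
    then show "kk y' + y' \<notin> Cf y" using c by blast
  qed
  show ?thesis by (rule exI[of _ Af], rule exI[of _ Cf]) (intro conjI P1 P2 P3)
qed


theorem lemma4: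
  fixes hG lK :: "'g::{topological_group_add, t2_space} measure"
    and K :: "'g set"
  assumes "locally_compact_space (euclidean :: 'g topology)"
    and "compact K" and "subgroup_of K"
    and "left_haar_on UNIV hG"
    and "left_haar_on K lK" and "emeasure lK K = 1"
    and "fin_dim_L1 hG (L_K0 hG lK)"
  shows "(\<forall>x. \<forall>k\<in>K. x + k - x \<in> K) \<or> finite (range (\<lambda>x. (\<lambda>k. x + k) ` K))"
proof (rule ccontr)
  assume neg: "\<not> ((\<forall>x. \<forall>k\<in>K. x + k - x \<in> K) \<or> finite (range (\<lambda>x. (\<lambda>k. x + k) ` K)))"
  have nn: "\<not> (\<forall>x. \<forall>k\<in>K. x + k - x \<in> K)" using neg by blast
  have cosr: "(\<lambda>x. (\<lambda>k. x + k) ` K) = cosK K" by (rule ext) (simp add: cosK_def)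
  have inf: "infinite (range (cosK K))" using neg unfolding cosr by blast
  obtain F where F: "finite F" "F \<subseteq> L_K0 hG lK"
      "\<forall>h\<in>L_K0 hG lK. \<exists>c. AE y in hG. h y = (\<Sum>g\<in>F. c g * g y)"
    using assms(7) unfolding fin_dim_L1_def by blast
  obtain Y where Y: "finite Y" "card Y = card F + 1" "\<forall>y\<in>Y. \<forall>y'\<in>Y. y \<noteq> y' \<longrightarrow> - y + y' \<notin> K"
      "\<forall>y\<in>Y. \<exists>k\<in>K. \<forall>y'\<in>Y. - y' + (k + y) \<notin> K"
    using comb_Y[OF assms(3) nn inf, of "card F + 1"] by blast
  from bchoice[OF Y(4)[unfolded Bex_def]] obtain kk where kk: "\<forall>y\<in>Y. kk y \<in> K \<and> (\<forall>y'\<in>Y. - y' + (kk y + y) \<notin> K)" ..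
  from construct[OF assms(1) assms(3) assms(2) Y(1) Y(3) kk] obtain Af Cf where
    ACs: "\<forall>y\<in>Y. open (Af y) \<and> compact (Cf y) \<and> Af y \<subseteq> Cf y \<and> y \<in> Af y \<and>
                   (\<forall>a\<in>Af y. \<forall>k\<in>K. a + k \<in> Af y)"
    and disj: "\<forall>y\<in>Y. \<forall>y'\<in>Y. y \<noteq> y' \<longrightarrow> Cf y \<inter> Cf y' = {}"
    and P3: "\<forall>y\<in>Y. \<forall>y'\<in>Y. kk y' + y' \<notin> Cf y"
    by blast
  have oA: "\<forall>y\<in>Y. open (Af y)" and cC: "\<forall>y\<in>Y. compact (Cf y)" and ACsub: "\<forall>y\<in>Y. Af y \<subseteq> Cf y"
    and yA: "\<forall>y\<in>Y. y \<in> Af y" and RS: "\<forall>y\<in>Y. \<forall>a\<in>Af y. \<forall>k\<in>K. a + k \<in> Af y"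
    using ACs by simp_all
  define Cl where "Cl = (\<Union>y\<in>Y. Cf y)"
  have clCl: "closed Cl" unfolding Cl_def
    by (rule compact_imp_closed, rule compact_UN[OF Y(1)]) (use cC in blast)
  define Rf where "Rf y = Af y \<inter> (\<lambda>x. kk y + x) -` (- Cl)" for y
  have oR: "\<forall>y\<in>Y. open (Rf y)"
  proof
    fix y assume y: "y \<in> Y"
    have "open ((\<lambda>x. kk y + x) -` (- Cl))"
      by (rule open_vimage_UNIV[OF cont_ladd]) (simp add: open_Compl clCl)
    then show "open (Rf y)" unfolding Rf_def using oA y by (intro open_Int) auto
  qed
  have neR: "\<forall>y\<in>Y. Rf y \<noteq> {}"
  proof
    fix y assume y: "y \<in> Y"
    have "kk y + y \<notin> Cl" unfolding Cl_def using P3 y by blast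
    then have "y \<in> Rf y" unfolding Rf_def using yA y by simp
    then show "Rf y \<noteq> {}" by blast
  qed
  have RA: "\<forall>y\<in>Y. Rf y \<subseteq> Af y" unfolding Rf_def by blast
  have esc: "\<forall>y\<in>Y. \<forall>x\<in>Rf y. \<exists>k\<in>K. - k + x \<notin> (\<Union>y'\<in>Y. Cf y')"
  proof (intro ballI)
    fix y x assume y: "y \<in> Y" and x: "x \<in> Rf y"
    have k: "- kk y \<in> K" using kk y assms(3) unfolding subgroup_of_def by blast
    have "- (- kk y) + x \<notin> Cl" using x unfolding Rf_def by simp
    then show "\<exists>k\<in>K. - k + x \<notin> (\<Union>y'\<in>Y. Cf y')" using k unfolding Cl_def by blast
  qed
  have hV: "hf lK (Af y) \<in> L_K0 hG lK" if y: "y \<in> Y" for y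
  proof -
    have "open (Af y)" "compact (Cf y)" "Af y \<subseteq> Cf y" "\<forall>a\<in>Af y. \<forall>k\<in>K. a + k \<in> Af y"
      using oA cC ACsub RS y by simp_all
    then show ?thesis by (rule h_LK0[OF assms(3) assms(2) assms(4) assms(5) assms(6)])
  qed
  have "\<forall>y\<in>Y. \<exists>c. AE x in hG. hf lK (Af y) x = (\<Sum>g\<in>F. c g * g x)"
    using F(3) hV by blast
  from bchoice[OF this] obtain cc where cc: "\<forall>y\<in>Y. AE x in hG. hf lK (Af y) x = (\<Sum>g\<in>F. cc y g * g x)" ..
  have "card F < card Y" using Y(2) by simp
  from lin_dep[OF F(1) Y(1) this, of cc] obtain a where
    a: "\<exists>i\<in>Y. a i \<noteq> 0" "\<forall>g\<in>F. (\<Sum>i\<in>Y. a i * cc i g) = 0" by blast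
  have ae: "AE x in hG. (\<Sum>y\<in>Y. a y * hf lK (Af y) x) = 0"
  proof -
    have "AE x in hG. \<forall>y\<in>Y. hf lK (Af y) x = (\<Sum>g\<in>F. cc y g * g x)"
      by (rule AE_finite_allI[OF Y(1)]) (use cc in blast)
    then show ?thesis
    proof (rule AE_mp[OF _ AE_I2], intro impI)
      fix x assume hx: "\<forall>y\<in>Y. hf lK (Af y) x = (\<Sum>g\<in>F. cc y g * g x)"
      have "(\<Sum>y\<in>Y. a y * hf lK (Af y) x) = (\<Sum>y\<in>Y. a y * (\<Sum>g\<in>F. cc y g * g x))"
        by (rule sum.cong[OF refl]) (simp add: hx)
      also have "\<dots> = (\<Sum>y\<in>Y. \<Sum>g\<in>F. a y * cc y g * g x)" by (simp add: sum_distrib_left mult.assoc)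
      also have "\<dots> = (\<Sum>g\<in>F. \<Sum>y\<in>Y. a y * cc y g * g x)" by (rule sum.swap)
      also have "\<dots> = (\<Sum>g\<in>F. (\<Sum>y\<in>Y. a y * cc y g) * g x)" by (simp add: sum_distrib_right)
      also have "\<dots> = 0" using a(2) by simp
      finally show "(\<Sum>y\<in>Y. a y * hf lK (Af y) x) = 0" .
    qed
  qed
  have "\<forall>y\<in>Y. a y = 0"
    by (rule indep[OF assms(3) assms(2) assms(4) assms(5) assms(6) Y(1) oA cC ACsub RS disj oR neR RA esc ae])
  then show False using a(1) by blast
qed

end
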